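(* Let $n\ge 1$, $k\ge1$, and $k=k_1+k_2$ with $k_1,k_2\ge 0$. Let $E$ be the set of all triples $(u,w,c)$ with $u\neq w$ in $[n]$ and $c\in[k]$, and let $\mathcal I$ be either (i) the set of all $(k_1,k_2)$-decreasing $k$-colored rooted forests on $[n]$, or (ii) the set of all $(k_1,k_2)$-non-increasing $k$-colored rooted forests on $[n]$. Then $(E,\mathcal I)$ is an $(n-1)$-covering system whose bases are the $k$-colored rooted trees in $\mathcal I$, and the map $\texttt{a}$ defined on each such tree $T$ by $$\texttt{a}(T)=\{(n,i,1)\in T:\ i\in[n]\}$$ (the set of edges of $T$ whose parent is $n$ and whose color is $1$) is an activity of $(E,\mathcal I)$.
   Context: For finite sets $X\subseteq Y$, write $[X,Y]=\{Z: X\subseteq Z\subseteq Y\}$. An $r$-covering system is a pair $(E,\mathcal I)$ where $E$ is a finite set and $\mathcal I$ is a collection of subsets of $E$, each of cardinality at most $r$, such that for every $I\in\mathcal I$ there exists $B\in\mathcal I$ with $|B|=r$ and $[I,B]\subseteq\mathcal I$; members of cardinality $r$ are bases. An activity is a function $\texttt{a}$ on the set $\mathcal B$ of bases with $\texttt{a}(B)\subseteq B$, $[B\setminus\texttt{a}(B),B]\subseteq\mathcal I$ for all $B$, and such that every $I\in\mathcal I$ lies in $[B\setminus\texttt{a}(B),B]$ for exactly one $B\in\mathcal B$. A $k$-colored rooted forest on $[n]$ is a set $F$ of triples $(u,w,c)$ ($u\ne w\in[n]$, $c\in[k]$; read as an edge from parent $u$ to child $w$ with color $c$) such that every vertex is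 the child in at most one triple and the underlying graph has no cycle; vertices that are not children are the roots (one per component). It is a tree if it has $n-1$ edges. For a vertex $v$ having at least one child, let $c_v$ be the minimum color of the edges from $v$ to its children. Given $k=k_1+k_2$, the forest is $(k_1,k_2)$-decreasing if for every vertex $v$ having a child and with $c_v\le k_1$, every child $w$ of $v$ joined to $v$ by an edge of color $c_v$ satisfies $w<v$. It is $(k_1,k_2)$-non-increasing if for every vertex $v$ having a child and with $c_v\le k_1$, at least one child $w$ of $v$ joined to $v$ by an edge of color $c_v$ satisfies $w<v$. (Colors in $[k_1+1,k]$ are "free": they are never checked.) *)

theory Defs
  imports Main
begin

definition set_interval :: "'a set \<Rightarrow> 'a set \<Rightarrow> 'a set set" where
  "set_interval X Y = {Z. X \<subseteq> Z \<and> Z \<subseteq> Y}"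

definition covering_system :: "nat \<Rightarrow> 'a set \<Rightarrow> 'a set set \<Rightarrow> bool" where
  "covering_system r E \<I> \<longleftrightarrow> finite E \<and> (\<forall>I\<in>\<I>. I \<subseteq> E \<and> card I \<le> r) \<and>
     (\<forall>I\<in>\<I>. \<exists>B\<in>\<I>. card B = r \<and> set_interval I B \<subseteq> \<I>)"

definition bases :: "nat \<Rightarrow> 'a set set \<Rightarrow> 'a set set" where
  "bases r \<I> = {B\<in>\<I>. card B = r}"

text \<open>An activity (only its values on bases matter).\<close>
definition activity :: "nat \<Rightarrow> 'a set set \<Rightarrow> ('a set \<Rightarrow> 'a set) \<Rightarrow> bool" where
  "activity r \<I> a \<longleftrightarrow>
     (\<forall>B\<in>bases r \<I>. a B \<subseteq> B \<and> set_interval (B - a B) B \<subseteq> \<I>) \<and>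
     (\<forall>I\<in>\<I>. \<exists>!B. B \<in> bases r \<I> \<and> I \<in> set_interval (B - a B) B)"

definition ground :: "nat \<Rightarrow> nat \<Rightarrow> (nat \<times> nat \<times> nat) set" where
  "ground n k = {(u,w,c). u \<in> {1..n} \<and> w \<in> {1..n} \<and> u \<noteq> w \<and> c \<in> {1..k}}"

definition parent_rel :: "(nat \<times> nat \<times> nat) set \<Rightarrow> (nat \<times> nat) set" where
  "parent_rel F = {(u,w). \<exists>c. (u,w,c) \<in> F}"

text \<open>Since every vertex has at most one parent, a cycle of the underlying (multi)graph is
  necessarily a directed cycle, so acyclicity is expressed via the parent relation.\<close>
definition colored_forest :: "nat \<Rightarrow> nat \<Rightarrow> (nat \<times> nat \<times> nat) set \<Rightarrow> bool" where
  "colored_forest n k F \<longleftrightarrow> F \<subseteq> ground n k \<and>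
     (\<forall>u w c u' c'. (u,w,c) \<in> F \<longrightarrow> (u',w,c') \<in> F \<longrightarrow> u = u' \<and> c = c') \<and>
     acyclic (parent_rel F)"

definition colored_tree :: "nat \<Rightarrow> nat \<Rightarrow> (nat \<times> nat \<times> nat) set \<Rightarrow> bool" where
  "colored_tree n k F \<longleftrightarrow> colored_forest n k F \<and> card F = n - 1"

definition min_child_color :: "(nat \<times> nat \<times> nat) set \<Rightarrow> nat \<Rightarrow> nat" where
  "min_child_color F v = Min {c. \<exists>w. (v,w,c) \<in> F}"

definition has_child :: "(nat \<times> nat \<times> nat) set \<Rightarrow> nat \<Rightarrow> bool" where
  "has_child F v \<longleftrightarrow> (\<exists>w c. (v,w,c) \<in> F)"

definition decreasing :: "nat \<Rightarrow> (nat \<times> nat \<times> nat) set \<Rightarrow> bool" where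
  "decreasing k1 F \<longleftrightarrow> (\<forall>v. has_child F v \<longrightarrow> min_child_color F v \<le> k1 \<longrightarrow>
      (\<forall>w. (v,w,min_child_color F v) \<in> F \<longrightarrow> w < v))"

definition non_increasing :: "nat \<Rightarrow> (nat \<times> nat \<times> nat) set \<Rightarrow> bool" where
  "non_increasing k1 F \<longleftrightarrow> (\<forall>v. has_child F v \<longrightarrow> min_child_color F v \<le> k1 \<longrightarrow>
      (\<exists>w. (v,w,min_child_color F v) \<in> F \<and> w < v))"

definition decreasing_forests :: "nat \<Rightarrow> nat \<Rightarrow> nat \<Rightarrow> (nat \<times> nat \<times> nat) set set" where
  "decreasing_forests n k1 k2 = {F. colored_forest n (k1+k2) F \<and> decreasing k1 F}"

definition non_increasing_forests :: "nat \<Rightarrow> nat \<Rightarrow> nat \<Rightarrow> (nat \<times> nat \<times> nat) set set" where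
  "non_increasing_forests n k1 k2 = {F. colored_forest n (k1+k2) F \<and> non_increasing k1 F}"

definition act :: "nat \<Rightarrow> (nat \<times> nat \<times> nat) set \<Rightarrow> (nat \<times> nat \<times> nat) set" where
  "act n T = {e \<in> T. \<exists>i\<in>{1..n}. e = (n,i,1)}"

end

theory Submission
  imports Defs
begin

lemma finite_ground: "finite (ground n k)"
proof -
  have "ground n k \<subseteq> {1..n} \<times> {1..n} \<times> {1..k}" by (auto simp: ground_def)
  thus ?thesis by (rule finite_subset) auto
qed

lemma parent_rel_mono: "Z \<subseteq> F \<Longrightarrow> parent_rel Z \<subseteq> parent_rel F"
  by (auto simp: parent_rel_def)

lemma forest_sub: "colored_forest n k F \<Longrightarrow> Z \<subseteq> F \<Longrightarrow> colored_forest n k Z"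
  unfolding colored_forest_def using acyclic_subset parent_rel_mono by blast

lemma card_forest: assumes "colored_forest n k F"
  shows "card F = card {w. \<exists>u c. (u,w,c) \<in> F}"
proof -
  have inj: "inj_on (\<lambda>(u,w,c). w) F" using assms unfolding colored_forest_def inj_on_def by fastforce
  have "{w. \<exists>u c. (u,w,c) \<in> F} = (\<lambda>(u,w,c). w) ` F" by force
  thus ?thesis using card_image[OF inj] by simp
qed

lemma anc_comp:
  assumes up: "\<And>u u' w. (u,w)\<in>r \<Longrightarrow> (u',w)\<in>r \<Longrightarrow> u=u'"
  and "(a,x)\<in>r\<^sup>*" shows "(b,x)\<in>r\<^sup>* \<Longrightarrow> (a,b)\<in>r\<^sup>* \<or> (b,a)\<in>r\<^sup>*"
  using assms(2)
proof (induction arbitrary: b rule: rtrancl_induct)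
  case base thus ?case by simp
next
  case (step y z)
  show ?case
  proof (cases "b = z")
    case True thus ?thesis using step.hyps by (meson rtrancl.rtrancl_into_rtrancl)
  next
    case False
    then obtain y' where "(b,y')\<in>r\<^sup>*" "(y',z)\<in>r" using step.prems by (meson rtranclE)
    with up step.hyps(2) have "y' = y" by blast
    thus ?thesis using step.IH \<open>(b,y')\<in>r\<^sup>*\<close> by blast
  qed
qed

lemma path_claim:
  assumes S: "\<And>a b. (a,b)\<in>S \<Longrightarrow> a = n"
  shows "(x,z) \<in> (r\<union>S)\<^sup>+ \<Longrightarrow> (x,z)\<in>r\<^sup>+ \<or> (\<exists>v. (n,v)\<in>S \<and> (v,z)\<in>r\<^sup>* \<and> (x,n)\<in>(r\<union>S)\<^sup>*)"
proof (induction rule: trancl_induct)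
  case (base y)
  then show ?case using S by auto
next
  case (step y z)
  from step.hyps(2) consider "(y,z)\<in>r" | "(y,z)\<in>S" by blast
  then show ?case
  proof cases
    case 1
    with step.IH show ?thesis by (meson rtrancl.rtrancl_into_rtrancl trancl.trancl_into_trancl)
  next
    case 2
    hence "y = n" using S by blast
    have "(x,y) \<in> (r\<union>S)\<^sup>*" using step.hyps(1) by (rule trancl_into_rtrancl)
    thus ?thesis using 2 \<open>y=n\<close> by auto
  qed
qed

lemma extend:
  assumes n1: "n \<ge> 1" and k1: "k \<ge> 1" and F: "colored_forest n k I"
  obtains B where "colored_forest n k B" "card B = n - 1" "I \<subseteq> B" "B - act n B \<subseteq> I"
    "\<And>v w c. v \<noteq> n \<Longrightarrow> (v,w,c) \<in> B \<longleftrightarrow> (v,w,c) \<in> I"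
    "\<And>B'. colored_forest n k B' \<Longrightarrow> card B' = n - 1 \<Longrightarrow> I \<subseteq> B' \<Longrightarrow> B' - act n B' \<subseteq> I \<Longrightarrow> B' = B"
proof -
  define r where "r = parent_rel I"
  have up: "\<And>u u' w. (u,w)\<in>r \<Longrightarrow> (u',w)\<in>r \<Longrightarrow> u=u'"
    using F unfolding r_def parent_rel_def colored_forest_def by blast
  have acyc: "acyclic r" using F unfolding r_def colored_forest_def by blast
  have rsub: "r \<subseteq> {1..n} \<times> {1..n}"
    using F by (auto simp: r_def parent_rel_def colored_forest_def ground_def)
  have finr: "finite r" by (rule finite_subset[OF rsub]) auto
  have wf: "wf r" using finite_acyclic_wf finr acyc by blast
  define Rt where "Rt = {v \<in> {1..n}. \<forall>u. (u,v) \<notin> r}"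
  have hn: "n \<in> {y. (y,n)\<in>r\<^sup>*}" by simp
  obtain z where z1: "z \<in> {y. (y,n)\<in>r\<^sup>*}" and z2: "\<And>y. (y,z)\<in>r \<Longrightarrow> y \<notin> {y. (y,n)\<in>r\<^sup>*}"
    by (rule wfE_min[OF wf hn]) blast
  define R where "R = z"
  have R1: "(R,n) \<in> r\<^sup>*" using z1 R_def by simp
  have R2: "\<forall>u. (u,R) \<notin> r" using z1 z2 R_def by (meson converse_rtrancl_into_rtrancl mem_Collect_eq)
  have Rn: "R \<in> {1..n}"
    using R1 proof (cases rule: converse_rtranclE)
    case base thus ?thesis using n1 by simp
  next
    case (step y) thus ?thesis using rsub by auto
  qed
  have RRt: "R \<in> Rt" using Rn R2 Rt_def by simp
  have nRt: "v \<noteq> n" if "v \<in> Rt" "v \<noteq> R" for v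
  proof
    assume "v = n"
    with that have "\<forall>u. (u,n) \<notin> r" by (simp add: Rt_def)
    with R1 have "R = n" by (meson rtranclE)
    with that \<open>v = n\<close> show False by simp
  qed
  define B where "B = I \<union> {(n,v,1) | v. v \<in> Rt \<and> v \<noteq> R}"
  define S where "S = {(n,v) | v. v \<in> Rt \<and> v \<noteq> R}"
  have prB: "parent_rel B = r \<union> S" by (auto simp: B_def S_def r_def parent_rel_def)
  have Ig: "I \<subseteq> ground n k" using F colored_forest_def by blast
  have grB: "B \<subseteq> ground n k"
    using Ig nRt n1 k1 by (auto simp: B_def Rt_def ground_def)
  have noparI: "\<And>u w c. (u,w,c) \<in> I \<Longrightarrow> w \<notin> Rt"
    by (auto simp: Rt_def r_def parent_rel_def)
  have uniq: "\<forall>u w c u' c'. (u,w,c)\<in>B \<longrightarrow> (u',w,c')\<in>B \<longrightarrow> u=u' \<and> c=c'"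
    using F noparI unfolding B_def colored_forest_def by blast
  have acycB: "acyclic (r \<union> S)"
    unfolding acyclic_def
  proof (intro allI notI)
    fix x assume cyc: "(x,x) \<in> (r\<union>S)\<^sup>+"
    have Sn: "\<And>a b. (a,b)\<in>S \<Longrightarrow> a = n" by (auto simp: S_def)
    have pc: "\<And>x z. (x,z) \<in> (r\<union>S)\<^sup>+ \<Longrightarrow> (x,z)\<in>r\<^sup>+ \<or> (\<exists>v. (n,v)\<in>S \<and> (v,z)\<in>r\<^sup>* \<and> (x,n)\<in>(r\<union>S)\<^sup>*)"
      by (rule path_claim) (auto simp: S_def)
    from pc[OF cyc] acyc obtain v where v: "(n,v)\<in>S" "(v,x)\<in>r\<^sup>*" "(x,n)\<in>(r\<union>S)\<^sup>*"
      unfolding acyclic_def by blast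
    have "(v,x) \<in> (r\<union>S)\<^sup>*" using v(2) rtrancl_mono[of r "r\<union>S"] by blast
    hence "(n,x) \<in> (r\<union>S)\<^sup>+" using v(1) by (meson UnI2 rtrancl_into_trancl2)
    hence nn: "(n,n) \<in> (r\<union>S)\<^sup>+" using v(3) by (meson trancl_rtrancl_trancl)
    from pc[OF nn] acyc obtain v' where v': "(n,v')\<in>S" "(v',n)\<in>r\<^sup>*"
      unfolding acyclic_def by blast
    have v'R: "v' \<in> Rt" "v' \<noteq> R" using v'(1) by (auto simp: S_def)
    from anc_comp[OF up v'(2) R1] have "(v',R)\<in>r\<^sup>* \<or> (R,v')\<in>r\<^sup>*" .
    moreover have "\<forall>u. (u,v') \<notin> r" using v'R Rt_def by simp
    ultimately have "v' = R" using R2 by (metis rtranclE)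
    with v'R show False by simp
  qed
  have forestB: "colored_forest n k B"
    unfolding colored_forest_def using grB uniq acycB prB by simp
  have children: "{w. \<exists>u c. (u,w,c) \<in> B} = {1..n} - {R}"
  proof
    show "{w. \<exists>u c. (u,w,c) \<in> B} \<subseteq> {1..n} - {R}"
    proof
      fix w assume "w \<in> {w. \<exists>u c. (u,w,c) \<in> B}"
      then obtain u c where e: "(u,w,c) \<in> B" by blast
      hence "w \<in> {1..n}" using grB by (auto simp: ground_def)
      moreover have "w \<noteq> R"
      proof
        assume "w = R"
        show False
        proof (cases "(u,w,c) \<in> I")
          case True
          hence "(u,w) \<in> r" by (auto simp: r_def parent_rel_def)
          with R2 \<open>w = R\<close> show False by simp
        next
          case False thus False using e \<open>w = R\<close> by (auto simp: B_def)
        qed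
      qed
      ultimately show "w \<in> {1..n} - {R}" by simp
    qed
  next
    show "{1..n} - {R} \<subseteq> {w. \<exists>u c. (u,w,c) \<in> B}"
    proof
      fix w assume w: "w \<in> {1..n} - {R}"
      show "w \<in> {w. \<exists>u c. (u,w,c) \<in> B}"
      proof (cases "w \<in> Rt")
        case True thus ?thesis using w by (auto simp: B_def)
      next
        case False
        then obtain u where "(u,w) \<in> r" using w Rt_def by auto
        then obtain c where "(u,w,c) \<in> I" by (auto simp: r_def parent_rel_def)
        thus ?thesis by (auto simp: B_def)
      qed
    qed
  qed
  have cardB: "card B = n - 1"
    using card_forest[OF forestB] children Rn by simp
  have IB: "I \<subseteq> B" by (auto simp: B_def)
  have actB: "B - act n B \<subseteq> I"
    using Rt_def by (auto simp: B_def act_def)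
  have agr: "\<And>v w c. v \<noteq> n \<Longrightarrow> (v,w,c) \<in> B \<longleftrightarrow> (v,w,c) \<in> I"
    by (auto simp: B_def)
  have finB: "finite B" using grB finite_ground finite_subset by blast
  have un: "B' = B" if B': "colored_forest n k B'" "card B' = n - 1" "I \<subseteq> B'" "B' - act n B' \<subseteq> I" for B'
  proof -
    have "B' \<subseteq> B"
    proof
      fix x assume x: "x \<in> B'"
      show "x \<in> B"
      proof (cases "x \<in> I")
        case True thus ?thesis using IB by blast
      next
        case False
        with x B'(4) have "x \<in> act n B'" by blast
        then obtain i where i: "x = (n,i,1)" "i \<in> {1..n}" by (auto simp: act_def)
        have iRt: "i \<in> Rt"
        proof -
          have "(u,i) \<notin> r" for u
          proof
            assume "(u,i) \<in> r"
            then obtain c where "(u,i,c) \<in> I" by (auto simp: r_def parent_rel_def)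
            hence "(u,i,c) \<in> B'" using B'(3) by blast
            with x i B'(1) have "u = n \<and> c = 1" unfolding colored_forest_def by blast
            with \<open>(u,i,c) \<in> I\<close> i False show False by simp
          qed
          thus ?thesis using i Rt_def by simp
        qed
        have "i \<noteq> R"
        proof
          assume "i = R"
          have rB': "r \<subseteq> parent_rel B'" using B'(3) parent_rel_mono r_def by blast
          have "(R,n) \<in> (parent_rel B')\<^sup>*" using R1 rtrancl_mono[OF rB'] by blast
          moreover have "(n,R) \<in> parent_rel B'" using x i \<open>i = R\<close> by (auto simp: parent_rel_def)
          ultimately have "(n,n) \<in> (parent_rel B')\<^sup>+" by (meson rtrancl_into_trancl2)
          with B'(1) show False unfolding colored_forest_def acyclic_def by blast
        qed
        with iRt i show ?thesis by (auto simp: B_def)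
      qed
    qed
    thus ?thesis using card_subset_eq[OF finB] cardB B'(2) by simp
  qed
  show ?thesis using that[OF forestB cardB IB actB agr un] by blast
qed


lemma generic:
  assumes n1: "n\<ge>1" and k1: "k\<ge>1"
  and tr: "\<And>F Z. colored_forest n k F \<Longrightarrow> P F \<Longrightarrow> colored_forest n k Z \<Longrightarrow>
      (\<And>v w c. v \<noteq> n \<Longrightarrow> (v,w,c)\<in>Z \<longleftrightarrow> (v,w,c)\<in>F) \<Longrightarrow> P Z"
  and II: "\<I> = {F. colored_forest n k F \<and> P F}"
  shows "covering_system (n-1) (ground n k) \<I> \<and> bases (n-1) \<I> = {T\<in>\<I>. colored_tree n k T}
    \<and> activity (n-1) \<I> (act n)"
proof -
  have base_iv: "set_interval (B - act n B) B \<subseteq> \<I>" if B: "B \<in> bases (n-1) \<I>" for B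
  proof
    fix Z assume Z: "Z \<in> set_interval (B - act n B) B"
    have fB: "colored_forest n k B" "P B" using B II by (auto simp: bases_def)
    have fZ: "colored_forest n k Z" using forest_sub[OF fB(1)] Z by (auto simp: set_interval_def)
    have "P Z"
    proof (rule tr[OF fB fZ])
      fix v w c assume "v \<noteq> n"
      thus "(v,w,c)\<in>Z \<longleftrightarrow> (v,w,c)\<in>B" using Z by (auto simp: set_interval_def act_def)
    qed
    thus "Z \<in> \<I>" using fZ II by simp
  qed
  have ex: "\<exists>B. B \<in> bases (n-1) \<I> \<and> I \<in> set_interval (B - act n B) B" if I: "I \<in> \<I>" for I
  proof -
    have fI: "colored_forest n k I" "P I" using I II by auto
    obtain B where B: "colored_forest n k B" "card B = n - 1" "I \<subseteq> B" "B - act n B \<subseteq> I"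
      "\<And>v w c. v \<noteq> n \<Longrightarrow> (v,w,c) \<in> B \<longleftrightarrow> (v,w,c) \<in> I"
      using extend[OF n1 k1 fI(1)] by metis
    have "P B" using tr[OF fI B(1)] B(5) by blast
    thus ?thesis using B II by (auto simp: bases_def set_interval_def)
  qed
  have un: "B = B'" if I: "I \<in> \<I>" and B: "B \<in> bases (n-1) \<I>" "I \<in> set_interval (B - act n B) B"
    and B': "B' \<in> bases (n-1) \<I>" "I \<in> set_interval (B' - act n B') B'" for I B B'
  proof -
    have fI: "colored_forest n k I" using I II by auto
    obtain B0 where B0: "\<And>B'. colored_forest n k B' \<Longrightarrow> card B' = n - 1 \<Longrightarrow> I \<subseteq> B' \<Longrightarrow> B' - act n B' \<subseteq> I \<Longrightarrow> B' = B0"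
      using extend[OF n1 k1 fI] by metis
    have "B = B0" using B II by (intro B0) (auto simp: bases_def set_interval_def)
    moreover have "B' = B0" using B' II by (intro B0) (auto simp: bases_def set_interval_def)
    ultimately show ?thesis by simp
  qed
  have cov: "covering_system (n-1) (ground n k) \<I>"
    unfolding covering_system_def
  proof (intro conjI ballI)
    show "finite (ground n k)" by (rule finite_ground)
  next
    fix I assume I: "I \<in> \<I>"
    then obtain B where B: "B \<in> bases (n-1) \<I>" "I \<in> set_interval (B - act n B) B" using ex by blast
    have fB: "colored_forest n k B" using B II by (auto simp: bases_def)
    have finB: "finite B" using fB finite_ground finite_subset unfolding colored_forest_def by blast
    have "card I \<le> card B" using B(2) finB by (intro card_mono) (auto simp: set_interval_def)
    moreover have "I \<subseteq> ground n k" using I II colored_forest_def by auto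
    ultimately show "card I \<le> n - 1" using B by (auto simp: bases_def)
  next
    fix I assume I: "I \<in> \<I>"
    show "I \<subseteq> ground n k" using I II colored_forest_def by auto
  next
    fix I assume I: "I \<in> \<I>"
    then obtain B where B: "B \<in> bases (n-1) \<I>" "I \<in> set_interval (B - act n B) B" using ex by blast
    have "set_interval I B \<subseteq> set_interval (B - act n B) B" using B(2) by (auto simp: set_interval_def)
    with base_iv[OF B(1)] B(1) show "\<exists>B\<in>\<I>. card B = n - 1 \<and> set_interval I B \<subseteq> \<I>"
      by (auto simp: bases_def)
  qed
  have bas: "bases (n-1) \<I> = {T\<in>\<I>. colored_tree n k T}"
    using II by (auto simp: bases_def colored_tree_def)
  have actv: "activity (n-1) \<I> (act n)"
    unfolding activity_def
  proof (intro conjI ballI)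
    fix B assume "B \<in> bases (n-1) \<I>"
    thus "act n B \<subseteq> B" by (auto simp: act_def)
  next
    fix B assume "B \<in> bases (n-1) \<I>"
    thus "set_interval (B - act n B) B \<subseteq> \<I>" using base_iv by blast
  next
    fix I assume I: "I \<in> \<I>"
    show "\<exists>!B. B \<in> bases (n - 1) \<I> \<and> I \<in> set_interval (B - act n B) B"
      using ex[OF I] un[OF I] by blast
  qed
  show ?thesis using cov bas actv by blast
qed

lemma tr_dec:
  assumes "colored_forest n k F" "decreasing k1 F" "colored_forest n k Z"
    "\<And>v w c. v \<noteq> n \<Longrightarrow> (v,w,c)\<in>Z \<longleftrightarrow> (v,w,c)\<in>F"
  shows "decreasing k1 Z"
  unfolding decreasing_def
proof (intro allI impI)
  fix v w assume hc: "has_child Z v" and m: "min_child_color Z v \<le> k1"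
    and e: "(v,w,min_child_color Z v) \<in> Z"
  show "w < v"
  proof (cases "v = n")
    case True
    thus ?thesis using e assms(3) by (auto simp: colored_forest_def ground_def)
  next
    case False
    have eq: "{c. \<exists>w. (v,w,c)\<in>Z} = {c. \<exists>w. (v,w,c)\<in>F}" using assms(4)[OF False] by auto
    have "has_child F v" using hc assms(4)[OF False] by (auto simp: has_child_def)
    moreover have "min_child_color Z v = min_child_color F v" using eq by (simp add: min_child_color_def)
    ultimately show ?thesis using assms(2) m e assms(4)[OF False] unfolding decreasing_def by auto
  qed
qed

lemma tr_ni:
  assumes "colored_forest n k F" "non_increasing k1 F" "colored_forest n k Z"
    "\<And>v w c. v \<noteq> n \<Longrightarrow> (v,w,c)\<in>Z \<longleftrightarrow> (v,w,c)\<in>F"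
  shows "non_increasing k1 Z"
  unfolding non_increasing_def
proof (intro allI impI)
  fix v assume hc: "has_child Z v" and m: "min_child_color Z v \<le> k1"
  show "\<exists>w. (v,w,min_child_color Z v) \<in> Z \<and> w < v"
  proof (cases "v = n")
    case True
    define C where "C = {c. \<exists>w. (v,w,c)\<in>Z}"
    have "C \<subseteq> {1..k}" using assms(3) by (auto simp: C_def colored_forest_def ground_def)
    hence fC: "finite C" using finite_subset by blast
    have "C \<noteq> {}" using hc by (auto simp: C_def has_child_def)
    hence "Min C \<in> C" using fC by simp
    then obtain w where w: "(v,w,Min C) \<in> Z" by (auto simp: C_def)
    hence "w < v" using True assms(3) by (auto simp: colored_forest_def ground_def)
    thus ?thesis using w by (auto simp: min_child_color_def C_def)
  next
    case False
    have eq: "{c. \<exists>w. (v,w,c)\<in>Z} = {c. \<exists>w. (v,w,c)\<in>F}" using assms(4)[OF False] by auto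
    have "has_child F v" using hc assms(4)[OF False] by (auto simp: has_child_def)
    moreover have "min_child_color Z v = min_child_color F v" using eq by (simp add: min_child_color_def)
    ultimately show ?thesis using assms(2) m assms(4)[OF False] unfolding non_increasing_def by auto
  qed
qed

theorem proposition4p2:
  fixes n k k1 k2 :: nat and \<I> :: "(nat \<times> nat \<times> nat) set set"
  assumes "n \<ge> 1" and "k \<ge> 1" and "k = k1 + k2"
    and "\<I> = decreasing_forests n k1 k2 \<or> \<I> = non_increasing_forests n k1 k2"
  shows "covering_system (n - 1) (ground n k) \<I>
    \<and> bases (n - 1) \<I> = {T \<in> \<I>. colored_tree n k T}
    \<and> activity (n - 1) \<I> (act n)"
  using assms(4)
proof
  assume "\<I> = decreasing_forests n k1 k2"
  hence II: "\<I> = {F. colored_forest n k F \<and> decreasing k1 F}"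
    using assms(3) by (simp add: decreasing_forests_def)
  show ?thesis by (rule generic[OF assms(1,2) _ II]) (rule tr_dec)
next
  assume "\<I> = non_increasing_forests n k1 k2"
  hence II: "\<I> = {F. colored_forest n k F \<and> non_increasing k1 F}"
    using assms(3) by (simp add: non_increasing_forests_def)
  show ?thesis by (rule generic[OF assms(1,2) _ II]) (rule tr_ni)
qed

end
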